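(* Let $N\ge1$ and $z\in\mathbb{C}^N$ with $z_j-z_k\notin i\pi\mathbb{Z}$ for $j\neq k$. Define the $N\times N$ matrix $Q$ by $$Q_{jk}=-\delta_{jk}\sum_{n\ne j}\coth(z_j-z_n)+(1-\delta_{jk})\frac{1}{\sinh(z_j-z_k)}.$$ Then $Q$ has spectrum $\{-N+1,-N+3,\ldots,N-3,N-1\}$ (i.e. its characteristic polynomial equals $\prod_{j=1}^N(\lambda-(2j-1-N))$). *)

theory Defs
  imports Complex_Main "Jordan_Normal_Form.Char_Poly"
begin

definition ccoth :: "complex \<Rightarrow> complex" where
  "ccoth w = cosh w / sinh w"

text \<open>The matrix Q of the paper, with indices shifted to 0..N-1.\<close>
definition Qmat :: "nat \<Rightarrow> (nat \<Rightarrow> complex) \<Rightarrow> complex mat" where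
  "Qmat N z = mat N N (\<lambda>(j, k).
     if j = k then - (\<Sum>n\<in>{0..<N} - {j}. ccoth (z j - z n))
     else 1 / sinh (z j - z k))"

end

theory Submission
  imports Defs
begin

lemma term_id:
  fixes a b :: complex assumes ab: "a \<noteq> b"
  shows "(2*b^(Suc m) - a^m*(a+b))/(a-b) = -(a^m) - 2*(\<Sum>i<m. a^i * b^(m-i))"
proof -
  define H where "H = (\<Sum>i<m. b^(m - Suc i) * a^i)"
  have d: "a^m - b^m = (a-b)*H" unfolding H_def by (rule power_diff_sumr2)
  have bH: "b*H = (\<Sum>i<m. a^i * b^(m-i))"
    unfolding H_def sum_distrib_left
  proof (rule sum.cong[OF refl])
    fix i assume "i \<in> {..<m}"
    then have "m - i = Suc (m - Suc i)" by auto
    then show "b * (b ^ (m - Suc i) * a ^ i) = a ^ i * b ^ (m - i)" by simp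
  qed
  have "2*b^(Suc m) - a^m*(a+b) = (a-b)*(-(a^m) - 2*(b*H))"
  proof -
    have g: "\<And>A B. A - B = (a-b)*H \<Longrightarrow> 2*(b*B) - A*(a+b) = (a-b)*(-A - 2*(b*H))"
    proof -
      fix A B assume "A - B = (a-b)*H"
      then have "B - A + (a-b)*H = B - A + (A - B)" by simp
      then have z: "B - A + (a-b)*H = 0" by simp
      have "2*(b*B) - A*(a+b) - (a-b)*(-A - 2*(b*H)) = 2*b*(B - A + (a-b)*H)"
        by (simp add: algebra_simps)
      then have "2*(b*B) - A*(a+b) - (a-b)*(-A - 2*(b*H)) = 0" using z by simp
      then show "2*(b*B) - A*(a+b) = (a-b)*(-A - 2*(b*H))" by simp
    qed
    show ?thesis unfolding power_Suc by (rule g[OF d])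
  qed
  then have "(2*b^(Suc m) - a^m*(a+b))/(a-b) = -(a^m) - 2*(b*H)" using ab by simp
  then show ?thesis using bH by simp
qed

lemma sinh_id:
  fixes w v :: complex
  assumes "exp (2*w) \<noteq> exp (2*v)"
  shows "1 / sinh (w - v) = 2 * exp w * exp v / (exp (2*w) - exp (2*v))"
    and "ccoth (w - v) = (exp (2*w) + exp (2*v)) / (exp (2*w) - exp (2*v))"
proof -
  have e2: "exp (2*w) = exp w * exp w" "exp (2*v) = exp v * exp v"
    by (simp_all add: exp_add[symmetric])
  have nz: "exp w \<noteq> 0" "exp v \<noteq> 0" by simp_all
  have ne: "exp w * exp w - exp v * exp v \<noteq> 0" using assms e2 by simp
  have s: "sinh (w - v) = (exp w * exp w - exp v * exp v) / (2 * exp w * exp v)"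
    using nz by (simp add: sinh_def exp_diff exp_minus scaleR_conv_of_real field_simps)
  have c: "cosh (w - v) = (exp w * exp w + exp v * exp v) / (2 * exp w * exp v)"
    using nz by (simp add: cosh_def exp_diff exp_minus scaleR_conv_of_real field_simps)
  show "1 / sinh (w - v) = 2 * exp w * exp v / (exp (2*w) - exp (2*v))"
    using nz ne unfolding s e2 by (simp add: field_simps)
  show "ccoth (w - v) = (exp (2*w) + exp (2*v)) / (exp (2*w) - exp (2*v))"
    using nz ne unfolding ccoth_def s c e2 by (simp add: field_simps)
qed

lemma exp_ne:
  fixes w v :: complex
  assumes "w - v \<notin> {\<i> * of_real pi * of_int m | m. m \<in> (UNIV :: int set)}"
  shows "exp (2*w) \<noteq> exp (2*v)"
proof
  assume a: "exp (2*w) = exp (2*v)"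
  define t where "t = 2*(w - v)"
  have et: "exp t = 1" unfolding t_def using a by (simp add: right_diff_distrib exp_diff)
  have "exp (Re t) = 1" using arg_cong[OF et, of norm] by simp
  then have re: "Re t = 0" by simp
  have "cos (Im t) = 1" using arg_cong[OF et, of Re] re by (simp add: Re_exp)
  then obtain n :: int where n: "Im t = n * 2 * pi" by (auto simp: cos_one_2pi_int)
  have "w - v = \<i> * of_real pi * of_int n"
    apply (intro complex_eqI) using re n by (auto simp: t_def algebra_simps)
  with assms show False by blast
qed


lemma vandermonde_ne:
  fixes x :: "nat \<Rightarrow> complex" and v :: "complex vec"
  assumes xne: "\<And>j k. j < N \<Longrightarrow> k < N \<Longrightarrow> j \<noteq> k \<Longrightarrow> x j \<noteq> x k"
    and v: "v \<in> carrier_vec N"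
    and z: "\<And>j. j < N \<Longrightarrow> (\<Sum>m\<in>{0..<N}. v $ m * x j ^ m) = 0"
  shows "v = 0\<^sub>v N"
proof -
  define p where "p = (\<Sum>m\<in>{0..<N}. monom (v $ m) m)"
  have cp: "coeff p i = (if i < N then v $ i else 0)" for i
    unfolding p_def by (simp add: coeff_sum coeff_monom)
  have pv: "poly p (x j) = (\<Sum>m\<in>{0..<N}. v $ m * x j ^ m)" for j
    unfolding p_def by (simp add: poly_sum poly_monom)
  show ?thesis
  proof (cases "N = 0")
    case True then show ?thesis using v by auto
  next
    case False
    have deg: "degree p \<le> N - 1" by (rule degree_le) (auto simp: cp)
    have inj: "inj_on x {0..<N}"
    proof (rule inj_onI)
      fix a b assume "a \<in> {0..<N}" "b \<in> {0..<N}" "x a = x b"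
      then show "a = b" using xne[of a b] by auto
    qed
    have card: "card (x ` {0..<N}) = N" using card_image[OF inj] by simp
    have "p = 0"
      by (rule poly_eqI_degree[of "x ` {0..<N}"]) (use z pv deg card False in auto)
    then have "v $ i = 0" if "i < N" for i using cp[of i] that by simp
    then show ?thesis using v by (intro eq_vecI) auto
  qed
qed

theorem corollary4p4:
  fixes N :: nat and z :: "nat \<Rightarrow> complex"
  assumes "N \<ge> 1"
    and "\<And>j k. j < N \<Longrightarrow> k < N \<Longrightarrow> j \<noteq> k \<Longrightarrow>
           z j - z k \<notin> {\<i> * of_real pi * of_int m | m. m \<in> (UNIV :: int set)}"
  shows "char_poly (Qmat N z) =
         (\<Prod>j = 1..N. [: - (of_int (2 * int j - 1 - int N) :: complex), 1 :])"
proof -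
  define u where "u = (\<lambda>j. exp (z j))"
  define x where "x = (\<lambda>j. exp (2 * z j))"
  have ux: "u j * u j = x j" for j unfolding u_def x_def by (simp add: exp_add[symmetric])
  have unz: "u j \<noteq> 0" for j unfolding u_def by simp
  have xne0: "exp (2 * z j) \<noteq> exp (2 * z k)" if "j < N" "k < N" "j \<noteq> k" for j k
    using exp_ne[OF assms(2)[OF that]] .
  have xne: "x j \<noteq> x k" if "j < N" "k < N" "j \<noteq> k" for j k
    using xne0[OF that] unfolding x_def .
  have sh: "1 / sinh (z j - z k) = 2 * u j * u k / (x j - x k)"
    if "j < N" "k < N" "j \<noteq> k" for j k
    using sinh_id(1)[OF xne0[OF that]] unfolding u_def x_def .
  have ch: "ccoth (z j - z k) = (x j + x k) / (x j - x k)"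
    if "j < N" "k < N" "j \<noteq> k" for j k
    using sinh_id(2)[OF xne0[OF that]] unfolding u_def x_def .
  define P where "P = (\<lambda>s. \<Sum>k\<in>{0..<N}. x k ^ s)"
  define Q where "Q = Qmat N z"
  define W where "W = mat N N (\<lambda>(j,m). u j * x j ^ m)"
  define T where "T = mat N N (\<lambda>(l,m). (if l = m then (of_int (2 * int m + 1 - int N) :: complex) else 0)
      + (if l < m then - 2 * P (m - l) else 0))"
  have Qc: "Q \<in> carrier_mat N N" unfolding Q_def Qmat_def by simp
  have Wc: "W \<in> carrier_mat N N" unfolding W_def by simp
  have Tc: "T \<in> carrier_mat N N" unfolding T_def by simp
  have Qe: "Q $$ (j,k) = (if j = k then - (\<Sum>n\<in>{0..<N} - {j}. ccoth (z j - z n))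
     else 1 / sinh (z j - z k))" if "j < N" "k < N" for j k
    unfolding Q_def Qmat_def using that by simp
  have entry: "(Q * W) $$ (j,m) = (W * T) $$ (j,m)" if j: "j < N" and m: "m < N" for j m
  proof -
    define S where "S = {0..<N} - {j}"
    have jin: "j \<in> {0..<N}" using j by simp
    have fS: "finite S" unfolding S_def by simp
    have cS: "card S = N - 1" unfolding S_def using j by simp
    define R where "R = (\<Sum>i<m. x j ^ i * P (m - i))"
    have "(Q * W) $$ (j,m) = (\<Sum>k\<in>{0..<N}. Q $$ (j,k) * (u k * x k ^ m))"
      using Qc Wc j m by (simp add: scalar_prod_def W_def)
    also have "\<dots> = Q $$ (j,j) * (u j * x j ^ m) + (\<Sum>k\<in>S. Q $$ (j,k) * (u k * x k ^ m))"
      unfolding S_def by (rule sum.remove[OF _ jin]) simp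
    also have "Q $$ (j,j) * (u j * x j ^ m) = (\<Sum>k\<in>S. u j * (- (x j ^ m * (x j + x k)) / (x j - x k)))"
    proof -
      have "Q $$ (j,j) * (u j * x j ^ m) = (\<Sum>k\<in>S. - ccoth (z j - z k) * (u j * x j ^ m))"
        using Qe[OF j j] by (simp add: S_def sum_distrib_right sum_negf)
      also have "\<dots> = (\<Sum>k\<in>S. u j * (- (x j ^ m * (x j + x k)) / (x j - x k)))"
      proof (rule sum.cong[OF refl])
        fix k assume k: "k \<in> S"
        then have k': "k < N" "j \<noteq> k" by (auto simp: S_def)
        show "- ccoth (z j - z k) * (u j * x j ^ m) = u j * (- (x j ^ m * (x j + x k)) / (x j - x k))"
          unfolding ch[OF j k'] by simp
      qed
      finally show ?thesis .
    qed
    also have "(\<Sum>k\<in>S. Q $$ (j,k) * (u k * x k ^ m)) = (\<Sum>k\<in>S. u j * (2 * x k ^ Suc m / (x j - x k)))"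
    proof (rule sum.cong[OF refl])
      fix k assume k: "k \<in> S"
      then have k': "k < N" "j \<noteq> k" by (auto simp: S_def)
      have "Q $$ (j,k) * (u k * x k ^ m) = 2 * u j * (u k * u k) * x k ^ m / (x j - x k)"
        unfolding Qe[OF j k'(1)] using k' sh[OF j k'(1) k'(2)] by simp
      then show "Q $$ (j,k) * (u k * x k ^ m) = u j * (2 * x k ^ Suc m / (x j - x k))"
        unfolding ux by simp
    qed
    also have "(\<Sum>k\<in>S. u j * (- (x j ^ m * (x j + x k)) / (x j - x k))) + (\<Sum>k\<in>S. u j * (2 * x k ^ Suc m / (x j - x k)))
      = (\<Sum>k\<in>S. u j * ((2 * x k ^ Suc m - x j ^ m * (x j + x k)) / (x j - x k)))"
      by (simp add: sum.distrib[symmetric] algebra_simps diff_divide_distrib add_divide_distrib)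
    also have "\<dots> = (\<Sum>k\<in>S. u j * (- (x j ^ m) - 2 * (\<Sum>i<m. x j ^ i * x k ^ (m - i))))"
    proof (rule sum.cong[OF refl])
      fix k assume k: "k \<in> S"
      then have k': "k < N" "j \<noteq> k" by (auto simp: S_def)
      show "u j * ((2 * x k ^ Suc m - x j ^ m * (x j + x k)) / (x j - x k)) =
        u j * (- (x j ^ m) - 2 * (\<Sum>i<m. x j ^ i * x k ^ (m - i)))"
        using term_id[OF xne[OF j k'(1) k'(2)], of m] by simp
    qed
    also have "\<dots> = u j * (- (of_nat (card S) * x j ^ m) - 2 * (\<Sum>i<m. x j ^ i * (\<Sum>k\<in>S. x k ^ (m - i))))"
    proof -
      have e1: "(\<Sum>k\<in>S. (\<Sum>i<m. x j ^ i * x k ^ (m - i))) = (\<Sum>i<m. x j ^ i * (\<Sum>k\<in>S. x k ^ (m - i)))"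
        by (simp add: sum_distrib_left) (rule sum.swap)
      have e2: "(\<Sum>k\<in>S. u j * (- (x j ^ m) - 2 * (\<Sum>i<m. x j ^ i * x k ^ (m - i))))
          = u j * (- (of_nat (card S) * x j ^ m) - 2 * (\<Sum>k\<in>S. (\<Sum>i<m. x j ^ i * x k ^ (m - i))))"
        by (simp add: sum_distrib_left[symmetric] sum_subtractf)
      show ?thesis unfolding e2 e1 ..
    qed
    also have "(\<Sum>i<m. x j ^ i * (\<Sum>k\<in>S. x k ^ (m - i))) = (\<Sum>i<m. x j ^ i * P (m - i) - x j ^ m)"
    proof (rule sum.cong[OF refl])
      fix i assume i: "i \<in> {..<m}"
      have hs: "(\<Sum>k\<in>S. x k ^ (m - i)) = P (m - i) - x j ^ (m - i)"
        unfolding S_def P_def using sum_diff1[of "{0..<N}" "\<lambda>k. x k ^ (m - i)" j] j by simp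
      have pw: "x j ^ i * x j ^ (m - i) = x j ^ m" using i by (simp add: power_add[symmetric])
      show "x j ^ i * (\<Sum>k\<in>S. x k ^ (m - i)) = x j ^ i * P (m - i) - x j ^ m"
        unfolding hs right_diff_distrib pw ..
    qed
    also have "\<dots> = R - of_nat m * x j ^ m" unfolding R_def by (simp add: sum_subtractf)
    finally have L: "(Q * W) $$ (j,m) = u j * (- (of_nat (N - 1) * x j ^ m) - 2 * (R - of_nat m * x j ^ m))"
      unfolding cS .
    have "(W * T) $$ (j,m) = (\<Sum>l\<in>{0..<N}. (u j * x j ^ l) * T $$ (l,m))"
      using Wc Tc j m by (simp add: scalar_prod_def W_def)
    also have "\<dots> = (\<Sum>l\<in>{0..<N}. (if l = m then u j * x j ^ l * of_int (2 * int m + 1 - int N) else 0))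
        + (\<Sum>l\<in>{0..<N}. (if l < m then u j * x j ^ l * (- 2 * P (m - l)) else 0))"
      unfolding sum.distrib[symmetric]
      by (rule sum.cong[OF refl]) (use m in \<open>auto simp: T_def\<close>)
    also have "\<dots> = u j * x j ^ m * of_int (2 * int m + 1 - int N) + (\<Sum>l<m. u j * x j ^ l * (- 2 * P (m - l)))"
    proof -
      have "{l\<in>{0..<N}. l < m} = {..<m}" using m by auto
      then show ?thesis using m by (simp add: sum.inter_filter[symmetric])
    qed
    also have "\<dots> = u j * (of_int (2 * int m + 1 - int N) * x j ^ m - 2 * R)"
      unfolding R_def by (simp add: algebra_simps sum_distrib_left sum_negf)
    finally have Rr: "(W * T) $$ (j,m) = u j * (of_int (2 * int m + 1 - int N) * x j ^ m - 2 * R)" .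
    have nN: "of_nat (N - 1) = (of_nat N - 1 :: complex)" using assms(1) by (simp add: of_nat_diff)
    show ?thesis unfolding L Rr nN by (simp add: algebra_simps)
  qed
  have QW: "Q * W = W * T"
    by (rule eq_matI) (use Qc Wc Tc entry in auto)
  have dW: "det W \<noteq> 0"
  proof
    assume "det W = 0"
    then obtain v where v: "v \<in> carrier_vec N" "v \<noteq> 0\<^sub>v N" "W *\<^sub>v v = 0\<^sub>v N"
      using det_0_iff_vec_prod_zero_field[OF Wc] by auto
    have "(\<Sum>m\<in>{0..<N}. v $ m * x j ^ m) = 0" if j: "j < N" for j
    proof -
      have "(W *\<^sub>v v) $ j = 0" using v(3) j by simp
      then have "(\<Sum>m\<in>{0..<N}. (u j * x j ^ m) * v $ m) = 0"
        using Wc v(1) j by (simp add: scalar_prod_def W_def)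
      then have "u j * (\<Sum>m\<in>{0..<N}. v $ m * x j ^ m) = 0"
        by (simp add: sum_distrib_left algebra_simps)
      then show ?thesis using unz by simp
    qed
    then have "v = 0\<^sub>v N" using vandermonde_ne[of N x v] xne v(1) by blast
    with v(2) show False by simp
  qed
  from det_non_zero_imp_unit[OF Wc dW, unfolded Units_def, of "()"]
  obtain B where Bc: "B \<in> carrier_mat N N" and BW: "B * W = 1\<^sub>m N" and WB: "W * B = 1\<^sub>m N"
    by (auto simp: ring_mat_def)
  have "Q = Q * (W * B)" using Qc by (simp add: WB)
  also have "\<dots> = (Q * W) * B" using Qc Wc Bc by (simp add: assoc_mult_mat)
  also have "\<dots> = W * T * B" unfolding QW ..
  finally have QWTB: "Q = W * T * B" .
  have "similar_mat Q T"
    unfolding similar_mat_def similar_mat_wit_def Let_def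
    using Qc Wc Tc Bc WB BW QWTB by (intro exI[of _ W] exI[of _ B]) auto
  then have "char_poly Q = char_poly T" by (rule char_poly_similar)
  also have ut: "upper_triangular T" unfolding upper_triangular_def T_def by auto
  have "char_poly T = (\<Prod> a \<leftarrow> diag_mat T. [:- a, 1:])"
    by (rule char_poly_upper_triangular[OF Tc ut])
  also have "\<dots> = (\<Prod>i\<in>{0..<N}. [: - (of_int (2 * int i + 1 - int N) :: complex), 1 :])"
  proof -
    have "diag_mat T = map (\<lambda>i. (of_int (2 * int i + 1 - int N) :: complex)) [0..<N]"
      unfolding diag_mat_def T_def by simp
    then show ?thesis
      by (simp add: prod.distinct_set_conv_list[symmetric] comp_def)
  qed
  also have "\<dots> = (\<Prod>j = 1..N. [: - (of_int (2 * int j - 1 - int N) :: complex), 1 :])"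
  proof -
    have "{1..N} = Suc ` {0..<N}" by (auto simp: image_iff)
    then show ?thesis
      apply (simp only:)
      apply (subst prod.reindex)
       apply simp
      apply (rule prod.cong[OF refl])
      apply (simp add: algebra_simps)
      done
  qed
  finally show ?thesis unfolding Q_def .
qed

end
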